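(* Let $D$ be a nondegenerate dendrite with a compatible metric $d$ and let $f\colon D\to D$ be continuous such that $\liminf_{n\to\infty} d(f^n(S_1),f^n(S_2))=0$ for all nondegenerate subdendrites $S_1,S_2$ of $D$. Then the intersection of any nonempty family of nondegenerate subdendrites $S$ of $D$ with $f(S)\subseteq S$ is an $f$-invariant (possibly degenerate) subdendrite of $D$, and hence contains a fixed point of $f$.
   Context: A dendrite is a locally connected continuum containing no simple closed curve; a subdendrite is a subcontinuum. $d(A,B)=\inf\{d(a,b): a\in A, b\in B\}$. A set $S$ is $f$-invariant if $f(S)\subseteq S$. *)

theory Defs
  imports "HOL-Analysis.Analysis" "HOL-Library.Liminf_Limsup"
begin

definition continuum :: "'a::topological_space set \<Rightarrow> bool" where
  "continuum S \<longleftrightarrow> S \<noteq> {} \<and> compact S \<and> connected S"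

definition nondegenerate :: "'a set \<Rightarrow> bool" where
  "nondegenerate S \<longleftrightarrow> (\<exists>x\<in>S. \<exists>y\<in>S. x \<noteq> y)"

definition simple_closed_curve :: "'a::topological_space set \<Rightarrow> bool" where
  "simple_closed_curve C \<longleftrightarrow> C homeomorphic sphere (0::complex) 1"

definition dendrite :: "'a::metric_space set \<Rightarrow> bool" where
  "dendrite D \<longleftrightarrow> continuum D \<and> locally connected D \<and>
     \<not> (\<exists>C. C \<subseteq> D \<and> simple_closed_curve C)"

definition subdendrite :: "'a::metric_space set \<Rightarrow> 'a set \<Rightarrow> bool" where
  "subdendrite D S \<longleftrightarrow> S \<subseteq> D \<and> continuum S"

end

theory Submission
  imports Defs
begin

instance bcontfun :: (metric_space, banach) banach ..

definition emb :: "'a::metric_space \<Rightarrow> ('a \<Rightarrow>\<^sub>C real)" where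
  "emb x = Bcontfun (\<lambda>z. dist x z - dist undefined z)"

lemma emb_in: "(\<lambda>z. dist x z - dist (undefined::'a::metric_space) z) \<in> bcontfun"
proof (rule bcontfun_normI)
  show "continuous_on UNIV (\<lambda>z. dist x z - dist (undefined::'a) z)"
    by (intro continuous_intros)
  show "norm (dist x z - dist undefined z) \<le> dist x undefined" for z
    using dist_triangle3[of x z undefined] dist_triangle3[of undefined z x]
    by (auto simp: dist_commute)
qed

lemma emb_apply: "apply_bcontfun (emb x) z = dist x z - dist undefined z"
  unfolding emb_def using emb_in[of x] by (simp add: Bcontfun_inverse)

lemma dist_emb [simp]: "dist (emb x) (emb y) = dist x y"
proof (rule antisym)
  show "dist (emb x) (emb y) \<le> dist x y"
  proof (rule dist_bound)
    fix z show "dist (apply_bcontfun (emb x) z) (apply_bcontfun (emb y) z) \<le> dist x y"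
      unfolding emb_apply dist_real_def
      using dist_triangle3[of x z y] dist_triangle3[of y z x]
      by (auto simp: dist_commute)
  qed
  have "dist (apply_bcontfun (emb x) x) (apply_bcontfun (emb y) x) \<le> dist (emb x) (emb y)"
    by (rule dist_bounded)
  then show "dist x y \<le> dist (emb x) (emb y)"
    unfolding emb_apply dist_real_def by (simp add: dist_commute)
qed

lemma inj_emb: "inj emb"
  by (metis dist_emb dist_eq_0_iff injI)

lemma continuous_on_emb: "continuous_on S emb"
  unfolding continuous_on_iff by (metis dist_emb)

definition embinv :: "('a::metric_space \<Rightarrow>\<^sub>C real) \<Rightarrow> 'a" where
  "embinv = inv emb"

lemma embinv_emb [simp]: "embinv (emb x) = x"
  by (simp add: embinv_def inj_emb)

lemma continuous_on_embinv: "S \<subseteq> range emb \<Longrightarrow> continuous_on S embinv"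
  unfolding continuous_on_iff
  by (smt (verit, ccfv_threshold) dist_emb embinv_emb imageE subsetD)


lemma ulc:
  fixes X :: "'a::metric_space set"
  assumes "compact X" "locally connected X" "e > 0"
  obtains d where "d > 0" "\<And>y z. y \<in> X \<Longrightarrow> z \<in> X \<Longrightarrow> dist y z < d \<Longrightarrow>
      \<exists>C. connected C \<and> C \<subseteq> X \<and> y \<in> C \<and> z \<in> C \<and> C \<subseteq> ball y e"
proof -
  have "\<exists>V. open V \<and> x \<in> V \<and> connected (X \<inter> V) \<and> X \<inter> V \<subseteq> ball x (e/2)" if "x \<in> X" for x
  proof -
    have "openin (top_of_set X) (X \<inter> ball x (e/2))"
      by (simp add: openin_open_Int)
    moreover have "x \<in> X \<inter> ball x (e/2)" using that \<open>e > 0\<close> by simp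
    ultimately obtain u where u: "openin (top_of_set X) u" "connected u" "x \<in> u" "u \<subseteq> X \<inter> ball x (e/2)"
      using assms(2) unfolding locally_connected by meson
    then obtain V where "open V" "u = X \<inter> V"
      by (meson openin_open)
    then show ?thesis using u by auto
  qed
  then obtain V where V: "\<And>x. x \<in> X \<Longrightarrow> open (V x) \<and> x \<in> V x \<and> connected (X \<inter> V x) \<and> X \<inter> V x \<subseteq> ball x (e/2)"
    by metis
  have "X \<subseteq> \<Union> (V ` X)" using V by blast
  then obtain d where d: "0 < d" "\<And>x. x \<in> X \<Longrightarrow> \<exists>G \<in> V ` X. ball x d \<subseteq> G"
    using Heine_Borel_lemma[OF assms(1)] V by (metis imageE)
  show ?thesis
  proof (rule that[OF d(1)])
    fix y z assume yz: "y \<in> X" "z \<in> X" "dist y z < d"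
    then obtain x where x: "x \<in> X" "ball y d \<subseteq> V x" using d by blast
    have "y \<in> X \<inter> V x" "z \<in> X \<inter> V x" using x yz d(1) by auto
    moreover have "X \<inter> V x \<subseteq> ball y e"
    proof
      fix w assume "w \<in> X \<inter> V x"
      then have "dist x w < e/2" "dist x y < e/2" using V[OF x(1)] \<open>y \<in> X \<inter> V x\<close> by auto
      then show "w \<in> ball y e" using dist_triangle3[of y w x] by (simp add: dist_commute)
    qed
    ultimately show "\<exists>C. connected C \<and> C \<subseteq> X \<and> y \<in> C \<and> z \<in> C \<and> C \<subseteq> ball y e"
      using V[OF x(1)] by (intro exI[of _ "X \<inter> V x"]) auto
  qed
qed

lemma connected_chain_pts:
  fixes C :: "'a::metric_space set"
  assumes "connected C" "y \<in> C" "z \<in> C" "d > 0"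
  shows "\<exists>ws. length ws \<ge> 2 \<and> hd ws = y \<and> last ws = z \<and> set ws \<subseteq> C \<and> successively (\<lambda>a b. dist a b < d) ws"
proof -
  define R where "R a b \<longleftrightarrow> (\<exists>ws. ws \<noteq> [] \<and> hd ws = a \<and> last ws = b \<and> set ws \<subseteq> C \<and> successively (\<lambda>a b. dist a b < d) ws)" for a b
  have "R y z"
  proof (rule connected_equivalence_relation[OF assms(1-3), of R])
    show "R b a" if "R a b" for a b
    proof -
      obtain ws where ws: "ws \<noteq> []" "hd ws = a" "last ws = b" "set ws \<subseteq> C" "successively (\<lambda>a b. dist a b < d) ws"
        using \<open>R a b\<close> R_def by blast
      show ?thesis unfolding R_def
        using ws by (intro exI[of _ "rev ws"]) (auto simp: successively_rev hd_rev last_rev dist_commute)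
    qed
    show "R a c" if "R a b" "R b c" for a b c
    proof -
      obtain ws where ws: "ws \<noteq> []" "hd ws = a" "last ws = b" "set ws \<subseteq> C" "successively (\<lambda>a b. dist a b < d) ws"
        using \<open>R a b\<close> R_def by blast
      obtain vs where vs: "vs \<noteq> []" "hd vs = b" "last vs = c" "set vs \<subseteq> C" "successively (\<lambda>a b. dist a b < d) vs"
        using \<open>R b c\<close> R_def by blast
      show ?thesis unfolding R_def
        using ws vs \<open>d > 0\<close> by (intro exI[of _ "ws @ vs"]) (auto simp: successively_append_iff)
    qed
    show "\<exists>T. openin (top_of_set C) T \<and> a \<in> T \<and> (\<forall>x\<in>T. R a x)" if "a \<in> C" for a
    proof (intro exI conjI)
      show "openin (top_of_set C) (C \<inter> ball a d)" by (simp add: openin_open_Int)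
      show "a \<in> C \<inter> ball a d" using that \<open>d > 0\<close> by simp
      show "\<forall>x\<in>C \<inter> ball a d. R a x"
        unfolding R_def using that by (intro ballI, rule_tac x="[a, x]" in exI) auto
    qed
  qed
  then obtain ws where ws: "ws \<noteq> []" "hd ws = y" "last ws = z" "set ws \<subseteq> C" "successively (\<lambda>a b. dist a b < d) ws"
    using R_def by blast
  show ?thesis
    using ws \<open>d > 0\<close> assms(2)
    by (intro exI[of _ "y # ws"]) (cases ws; auto simp: Suc_le_eq)
qed

fun pjoin :: "('b \<Rightarrow> 'b \<Rightarrow> real \<Rightarrow> 'b::topological_space) \<Rightarrow> 'b list \<Rightarrow> real \<Rightarrow> 'b" where
  "pjoin P [] = (\<lambda>t. undefined)"
| "pjoin P [a] = (\<lambda>t. a)"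
| "pjoin P [a, b] = P a b"
| "pjoin P (a # b # c # r) = P a b +++ pjoin P (b # c # r)"

lemma pjoin_path:
  assumes "successively R ws" "length ws \<ge> 2"
    and "\<And>a b. R a b \<Longrightarrow> path (P a b) \<and> pathstart (P a b) = a \<and> pathfinish (P a b) = b"
  shows "path (pjoin P ws) \<and> pathstart (pjoin P ws) = hd ws \<and> pathfinish (pjoin P ws) = last ws"
  using assms
proof (induction P ws rule: pjoin.induct)
  case (4 P a b c r)
  then show ?case by auto
qed auto

lemma pjoin_rel:
  assumes "successively R ws" "length ws \<ge> 2" "set ws \<subseteq> S"
    and "\<And>a b t. R a b \<Longrightarrow> a \<in> S \<Longrightarrow> b \<in> S \<Longrightarrow> t \<in> {0..1} \<Longrightarrow> Q (P1 a b t) (P2 a b t)"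
    and "t \<in> {0..1}"
  shows "Q (pjoin P1 ws t) (pjoin P2 ws t)"
  using assms
proof (induction ws arbitrary: t rule: induct_list012)
  case (3 a b r)
  show ?case
  proof (cases r)
    case Nil
    then show ?thesis using 3 by auto
  next
    case (Cons c r')
    have eq1: "pjoin P1 (a # b # r) = P1 a b +++ pjoin P1 (b # r)"
     and eq2: "pjoin P2 (a # b # r) = P2 a b +++ pjoin P2 (b # r)"
      using Cons by auto
    show ?thesis
    proof (cases "t \<le> 1/2")
      case True
      then show ?thesis unfolding eq1 eq2 joinpaths_def using 3 by auto
    next
      case False
      have "Q (pjoin P1 (b # r) (2*t-1)) (pjoin P2 (b # r) (2*t-1))"
      proof (rule "3.IH"(2))
        show "successively R (b # r)" using "3.prems"(1) by simp
        show "2 \<le> length (b # r)" using Cons by simp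
        show "set (b # r) \<subseteq> S" using "3.prems"(3) by simp
        show "2 * t - 1 \<in> {0..1}" using False "3.prems"(5) by auto
      qed (use "3.prems"(4) in auto)
      then show ?thesis unfolding eq1 eq2 joinpaths_def using False by auto
    qed
  qed
qed auto


lemma dist_linepath_start:
  fixes y z :: "'b::real_normed_vector"
  assumes "t \<in> {0..1}"
  shows "dist (linepath y z t) y \<le> dist y z"
proof -
  have "linepath y z t - y = t *\<^sub>R (z - y)"
    by (simp add: linepath_def algebra_simps)
  then have "dist (linepath y z t) y = \<bar>t\<bar> * norm (z - y)"
    by (simp add: dist_norm)
  also have "\<dots> \<le> norm (z - y)"
    using assms by (simp add: mult_left_le_one_le)
  finally show ?thesis by (simp add: dist_norm norm_minus_commute)
qed

fun apx :: "(nat \<Rightarrow> 'b \<Rightarrow> 'b \<Rightarrow> 'b list) \<Rightarrow> nat \<Rightarrow> nat \<Rightarrow> 'b \<Rightarrow> 'b \<Rightarrow> real \<Rightarrow> 'b::real_normed_vector" where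
  "apx ch 0 n y z = linepath y z"
| "apx ch (Suc m) n y z = pjoin (apx ch m (Suc n)) (ch n y z)"

locale pchain =
  fixes Y :: "'b::real_normed_vector set" and ch :: "nat \<Rightarrow> 'b \<Rightarrow> 'b \<Rightarrow> 'b list"
    and \<delta> \<epsilon> :: "nat \<Rightarrow> real"
  assumes CH: "\<And>n y z. y \<in> Y \<Longrightarrow> z \<in> Y \<Longrightarrow> dist y z < \<delta> n \<Longrightarrow>
      length (ch n y z) \<ge> 2 \<and> hd (ch n y z) = y \<and> last (ch n y z) = z \<and>
      set (ch n y z) \<subseteq> Y \<inter> ball y (\<epsilon> n) \<and>
      successively (\<lambda>a b. a \<in> Y \<and> b \<in> Y \<and> dist a b < \<delta> (Suc n)) (ch n y z)"
    and DE: "\<And>n. \<delta> n \<le> \<epsilon> n"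
begin

lemma apx_path:
  "y \<in> Y \<Longrightarrow> z \<in> Y \<Longrightarrow> dist y z < \<delta> n \<Longrightarrow>
   path (apx ch m n y z) \<and> pathstart (apx ch m n y z) = y \<and> pathfinish (apx ch m n y z) = z"
proof (induction m arbitrary: n y z)
  case 0
  then show ?case by simp
next
  case (Suc m)
  note c = CH[OF Suc.prems]
  have "path (pjoin (apx ch m (Suc n)) (ch n y z)) \<and> pathstart (pjoin (apx ch m (Suc n)) (ch n y z)) = hd (ch n y z)
        \<and> pathfinish (pjoin (apx ch m (Suc n)) (ch n y z)) = last (ch n y z)"
    by (rule pjoin_path[of "\<lambda>a b. a \<in> Y \<and> b \<in> Y \<and> dist a b < \<delta> (Suc n)"]) (use c Suc.IH in auto)
  then show ?case using c by simp
qed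

lemma apx_near:
  "y \<in> Y \<Longrightarrow> z \<in> Y \<Longrightarrow> dist y z < \<delta> n \<Longrightarrow> t \<in> {0..1} \<Longrightarrow>
   \<exists>x\<in>Y. dist (apx ch m n y z t) x < \<delta> (n + m)"
proof (induction m arbitrary: n y z t)
  case 0
  then show ?case using dist_linepath_start[of t y z] by force
next
  case (Suc m)
  note c = CH[OF Suc.prems(1-3)]
  have "(\<lambda>p q. \<exists>x\<in>Y. dist p x < \<delta> (Suc n + m)) (pjoin (apx ch m (Suc n)) (ch n y z) t) (pjoin (apx ch m (Suc n)) (ch n y z) t)"
  proof (rule pjoin_rel[of "\<lambda>a b. a \<in> Y \<and> b \<in> Y \<and> dist a b < \<delta> (Suc n)" _ Y])
    fix a b t' assume "a \<in> Y \<and> b \<in> Y \<and> dist a b < \<delta> (Suc n)" "t' \<in> {0..1::real}"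
    then show "\<exists>x\<in>Y. dist (apx ch m (Suc n) a b t') x < \<delta> (Suc n + m)"
      using Suc.IH[of a b "Suc n" t'] by auto
  qed (use c Suc in auto)
  then show ?case by simp
qed

lemma apx_step:
  "y \<in> Y \<Longrightarrow> z \<in> Y \<Longrightarrow> dist y z < \<delta> n \<Longrightarrow> t \<in> {0..1} \<Longrightarrow>
   dist (apx ch (Suc m) n y z t) (apx ch m n y z t) \<le> 2 * \<epsilon> (n + m)"
proof (induction m arbitrary: n y z t)
  case 0
  note c = CH[OF "0.prems"(1-3)]
  have "(\<lambda>p q. p \<in> ball y (\<epsilon> n)) (pjoin (apx ch 0 (Suc n)) (ch n y z) t) (pjoin (apx ch 0 (Suc n)) (ch n y z) t)"
  proof (rule pjoin_rel[of "\<lambda>a b. a \<in> Y \<and> b \<in> Y \<and> dist a b < \<delta> (Suc n)" _ "Y \<inter> ball y (\<epsilon> n)"])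
    fix a b t' assume "a \<in> Y \<inter> ball y (\<epsilon> n)" "b \<in> Y \<inter> ball y (\<epsilon> n)" "t' \<in> {0..1::real}"
    then show "apx ch 0 (Suc n) a b t' \<in> ball y (\<epsilon> n)"
      using linepath_in_path[of t' a b] closed_segment_subset[of a "ball y (\<epsilon> n)" b] by auto
  qed (use c "0.prems" in auto)
  then have "dist y (apx ch 1 n y z t) < \<epsilon> n" by simp
  moreover have "dist (apx ch 0 n y z t) y < \<epsilon> n"
    using dist_linepath_start[OF "0.prems"(4), of y z] "0.prems"(3) DE[of n] by simp
  ultimately show ?case
    using dist_triangle[of "apx ch 1 n y z t" "apx ch 0 n y z t" y]
    by (simp add: dist_commute)
next
  case (Suc m)
  note c = CH[OF Suc.prems(1-3)]
  have "(\<lambda>p q. dist p q \<le> 2 * \<epsilon> (Suc n + m)) (pjoin (apx ch (Suc m) (Suc n)) (ch n y z) t) (pjoin (apx ch m (Suc n)) (ch n y z) t)"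
  proof (rule pjoin_rel[of "\<lambda>a b. a \<in> Y \<and> b \<in> Y \<and> dist a b < \<delta> (Suc n)" _ Y])
    fix a b t' assume "a \<in> Y \<and> b \<in> Y \<and> dist a b < \<delta> (Suc n)" "t' \<in> {0..1::real}"
    then show "dist (apx ch (Suc m) (Suc n) a b t') (apx ch m (Suc n) a b t') \<le> 2 * \<epsilon> (Suc n + m)"
      using Suc.IH[of a b "Suc n" t'] by auto
  qed (use c Suc in auto)
  then show ?case by simp
qed

lemma apx_total:
  "y \<in> Y \<Longrightarrow> z \<in> Y \<Longrightarrow> dist y z < \<delta> n \<Longrightarrow> t \<in> {0..1} \<Longrightarrow>
   dist (apx ch m n y z t) (apx ch 0 n y z t) \<le> (\<Sum>j<m. 2 * \<epsilon> (n + j))"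
proof (induction m)
  case 0
  then show ?case by simp
next
  case (Suc m)
  then show ?case
    using apx_step[OF Suc.prems, of m] dist_triangle[of "apx ch (Suc m) n y z t" "apx ch 0 n y z t" "apx ch m n y z t"]
    by simp
qed

end


lemma geom_sum_bound:
  fixes e :: real
  shows "(\<Sum>j<m. 2 * (e / 2 ^ j)) = 4 * e - 4 * e / 2 ^ m"
  by (induction m) (simp_all add: field_simps)

lemma apx_limit:
  fixes Y :: "'b::banach set"
  assumes pc: "pchain Y ch \<delta> (\<lambda>n. e / 2 ^ n)" and "closed Y" "e > 0"
    and yz: "y \<in> Y" "z \<in> Y" "dist y z < \<delta> 0"
  shows "\<exists>g. path g \<and> pathstart g = y \<and> pathfinish g = z \<and> path_image g \<subseteq> Y \<and> path_image g \<subseteq> cball y (5*e)"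
proof -
  interpret pchain Y ch \<delta> "\<lambda>n. e / 2 ^ n" by (rule pc)
  define g where "g m = apx ch m 0 y z" for m
  define f where "f i t = g (Suc i) t - g i t" for i t
  have gpath: "path (g m) \<and> pathstart (g m) = y \<and> pathfinish (g m) = z" for m
    unfolding g_def using apx_path[OF yz] by blast
  have fb: "norm (f i t) \<le> 2 * (e / 2 ^ i)" if "t \<in> {0..1}" for i t
    using apx_step[OF yz that, of i] by (simp add: f_def g_def dist_norm)
  have sM: "summable (\<lambda>i. 2 * (e / 2 ^ i))"
  proof -
    have "summable (\<lambda>i. (1/2::real) ^ i)" by (rule summable_geometric) simp
    then have "summable (\<lambda>i. (2 * e) * (1/2::real) ^ i)" by (rule summable_mult)
    then show ?thesis by (simp add: power_one_over)
  qed
  have ul: "uniform_limit {0..1} (\<lambda>m t. \<Sum>i<m. f i t) (\<lambda>t. suminf (\<lambda>i. f i t)) sequentially"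
    by (rule Weierstrass_m_test[OF _ sM]) (use fb in auto)
  have tel: "(\<Sum>i<m. f i t) = g m t - g 0 t" for m t
    unfolding f_def by (rule sum_lessThan_telescope)
  define L where "L t = suminf (\<lambda>i. f i t) + g 0 t" for t
  have "continuous_on {0..1} (\<lambda>t. suminf (\<lambda>i. f i t))"
  proof (rule uniform_limit_theorem[OF _ ul])
    show "\<forall>\<^sub>F n in sequentially. continuous_on {0..1} (\<lambda>t. \<Sum>i<n. f i t)"
      unfolding tel using gpath by (intro always_eventually allI continuous_intros) (auto simp: path_def)
  qed simp
  then have contL: "continuous_on {0..1} L"
    unfolding L_def using gpath by (intro continuous_intros) (auto simp: path_def)
  have conv: "(\<lambda>m. g m t) \<longlonglongrightarrow> L t" if "t \<in> {0..1}" for t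
  proof -
    have "(\<lambda>m. \<Sum>i<m. f i t) \<longlonglongrightarrow> suminf (\<lambda>i. f i t)"
      using uniform_limit_on_subset[OF ul, of "{t}"] that by simp
    then have "(\<lambda>m. (\<Sum>i<m. f i t) + g 0 t) \<longlonglongrightarrow> L t"
      unfolding L_def by (intro tendsto_add tendsto_const)
    then show ?thesis unfolding tel by simp
  qed
  have L0: "L 0 = y"
    using conv[of 0] gpath by (simp add: pathstart_def LIMSEQ_const_iff)
  have L1: "L 1 = z"
    using conv[of 1] gpath by (simp add: pathfinish_def LIMSEQ_const_iff)
  have LY: "L t \<in> Y" if "t \<in> {0..1}" for t
  proof -
    have "\<exists>x\<in>Y. dist (g m t) x < \<delta> m" for m
      using apx_near[OF yz that, of m] by (simp add: g_def)
    then obtain x where x: "\<And>m. x m \<in> Y" "\<And>m. dist (g m t) (x m) < \<delta> m" by metis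
    have "(\<lambda>m. x m - g m t) \<longlonglongrightarrow> 0"
    proof (rule Lim_null_comparison)
      show "\<forall>\<^sub>F m in sequentially. norm (x m - g m t) \<le> e / 2 ^ m"
        using x(2) DE by (intro always_eventually allI) (smt (verit, best) dist_commute dist_norm)
      have "(\<lambda>m. e * (1/2::real) ^ m) \<longlonglongrightarrow> e * 0"
        by (intro tendsto_mult tendsto_const LIMSEQ_realpow_zero) auto
      then show "(\<lambda>m. e / 2 ^ m) \<longlonglongrightarrow> 0" by (simp add: power_one_over)
    qed
    then have "(\<lambda>m. (x m - g m t) + g m t) \<longlonglongrightarrow> 0 + L t"
      by (intro tendsto_add conv that)
    then have "x \<longlonglongrightarrow> L t" by simp
    then show ?thesis
      by (rule Lim_in_closed_set[OF \<open>closed Y\<close>, rotated 2]) (use x in auto)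
  qed
  have Lb: "L t \<in> cball y (5*e)" if "t \<in> {0..1}" for t
  proof (rule Lim_in_closed_set[OF closed_cball _ _ conv[OF that]])
    show "\<forall>\<^sub>F m in sequentially. g m t \<in> cball y (5 * e)"
    proof (intro always_eventually allI)
      fix m
      have "dist (g m t) (g 0 t) \<le> 4 * e"
        using apx_total[OF yz that, of m] geom_sum_bound[of e m] \<open>e > 0\<close>
        by (simp add: g_def) (smt (verit) divide_pos_pos zero_less_power)
      moreover have "dist (g 0 t) y \<le> e"
        using dist_linepath_start[OF that, of y z] yz(3) DE[of 0] by (simp add: g_def)
      ultimately show "g m t \<in> cball y (5 * e)"
        using dist_triangle[of "g m t" y "g 0 t"] by (simp add: dist_commute)
    qed
  qed simp
  show ?thesis
    using contL L0 L1 LY Lb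
    by (intro exI[of _ L]) (auto simp: path_def pathstart_def pathfinish_def path_image_def)
qed


lemma small_paths_banach:
  fixes Y :: "'b::banach set"
  assumes "compact Y"
    and ULC: "\<And>e. e > 0 \<Longrightarrow> \<exists>d>0. \<forall>y\<in>Y. \<forall>z\<in>Y. dist y z < d \<longrightarrow>
                 (\<exists>C. connected C \<and> C \<subseteq> Y \<and> y \<in> C \<and> z \<in> C \<and> C \<subseteq> ball y e)"
    and "e > 0"
  shows "\<exists>d>0. \<forall>y\<in>Y. \<forall>z\<in>Y. dist y z < d \<longrightarrow>
           (\<exists>g. path g \<and> pathstart g = y \<and> pathfinish g = z \<and> path_image g \<subseteq> Y \<and> path_image g \<subseteq> cball y (5*e))"
proof -
  define \<epsilon> where "\<epsilon> n = e / 2 ^ n" for n :: nat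
  have "\<exists>d>0. d \<le> \<epsilon> n \<and> (\<forall>y\<in>Y. \<forall>z\<in>Y. dist y z < d \<longrightarrow>
                 (\<exists>C. connected C \<and> C \<subseteq> Y \<and> y \<in> C \<and> z \<in> C \<and> C \<subseteq> ball y (\<epsilon> n)))" for n
  proof -
    have "\<epsilon> n > 0" using \<open>e > 0\<close> by (simp add: \<epsilon>_def)
    then obtain d where "d > 0" and d: "\<forall>y\<in>Y. \<forall>z\<in>Y. dist y z < d \<longrightarrow>
                 (\<exists>C. connected C \<and> C \<subseteq> Y \<and> y \<in> C \<and> z \<in> C \<and> C \<subseteq> ball y (\<epsilon> n))"
      using ULC by blast
    show ?thesis
      using d \<open>d > 0\<close> \<open>\<epsilon> n > 0\<close> by (intro exI[of _ "min d (\<epsilon> n)"]) auto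
  qed
  then obtain \<delta> where \<delta>: "\<And>n. \<delta> n > 0" "\<And>n. \<delta> n \<le> \<epsilon> n"
    "\<And>n y z. y \<in> Y \<Longrightarrow> z \<in> Y \<Longrightarrow> dist y z < \<delta> n \<Longrightarrow>
                 (\<exists>C. connected C \<and> C \<subseteq> Y \<and> y \<in> C \<and> z \<in> C \<and> C \<subseteq> ball y (\<epsilon> n))"
    by metis
  define P where "P n y z ws \<longleftrightarrow> length ws \<ge> 2 \<and> hd ws = y \<and> last ws = z \<and>
      set ws \<subseteq> Y \<inter> ball y (\<epsilon> n) \<and>
      successively (\<lambda>a b. a \<in> Y \<and> b \<in> Y \<and> dist a b < \<delta> (Suc n)) ws" for n y z ws
  define ch where "ch n y z = (SOME ws. P n y z ws)" for n y z
  have CH: "P n y z (ch n y z)" if yz: "y \<in> Y" "z \<in> Y" "dist y z < \<delta> n" for n y z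
  proof -
    obtain C where C: "connected C" "C \<subseteq> Y" "y \<in> C" "z \<in> C" "C \<subseteq> ball y (\<epsilon> n)"
      using \<delta>(3)[OF yz] by blast
    obtain ws where ws: "length ws \<ge> 2" "hd ws = y" "last ws = z" "set ws \<subseteq> C"
        "successively (\<lambda>a b. dist a b < \<delta> (Suc n)) ws"
      using connected_chain_pts[OF C(1,3,4) \<delta>(1)[of "Suc n"]] by blast
    have "P n y z ws"
      unfolding P_def using ws C
      by (auto elim!: successively_mono)
    then show ?thesis unfolding ch_def by (rule someI)
  qed
  have pc: "pchain Y ch \<delta> (\<lambda>n. e / 2 ^ n)"
    by unfold_locales (use CH \<delta>(2) in \<open>auto simp: P_def \<epsilon>_def\<close>)
  show ?thesis
    using apx_limit[OF pc compact_imp_closed[OF \<open>compact Y\<close>] \<open>e > 0\<close>] \<delta>(1)[of 0]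
    by blast
qed

lemma small_paths:
  fixes X :: "'a::metric_space set"
  assumes "compact X" "locally connected X" "e > 0"
  shows "\<exists>d>0. \<forall>y\<in>X. \<forall>z\<in>X. dist y z < d \<longrightarrow>
           (\<exists>g. path g \<and> pathstart g = y \<and> pathfinish g = z \<and> path_image g \<subseteq> X \<and> path_image g \<subseteq> cball y (5*e))"
proof -
  define Y where "Y = emb ` X"
  have cY: "compact Y"
    unfolding Y_def by (rule compact_continuous_image[OF continuous_on_emb assms(1)])
  have ULC: "\<exists>d>0. \<forall>y\<in>Y. \<forall>z\<in>Y. dist y z < d \<longrightarrow>
                 (\<exists>C. connected C \<and> C \<subseteq> Y \<and> y \<in> C \<and> z \<in> C \<and> C \<subseteq> ball y e')" if "e' > 0" for e'
  proof -
    obtain d where d: "d > 0" "\<And>y z. y \<in> X \<Longrightarrow> z \<in> X \<Longrightarrow> dist y z < d \<Longrightarrow>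
      \<exists>C. connected C \<and> C \<subseteq> X \<and> y \<in> C \<and> z \<in> C \<and> C \<subseteq> ball y e'"
      using ulc[OF assms(1,2) \<open>e' > 0\<close>] by metis
    show ?thesis
    proof (intro exI[of _ d] conjI ballI impI)
      fix y' z' assume "y' \<in> Y" "z' \<in> Y" "dist y' z' < d"
      then obtain y z where yz: "y \<in> X" "z \<in> X" "y' = emb y" "z' = emb z" unfolding Y_def by blast
      then obtain C where C: "connected C" "C \<subseteq> X" "y \<in> C" "z \<in> C" "C \<subseteq> ball y e'"
        using d(2)[of y z] \<open>dist y' z' < d\<close> by auto
      show "\<exists>C. connected C \<and> C \<subseteq> Y \<and> y' \<in> C \<and> z' \<in> C \<and> C \<subseteq> ball y' e'"
        using C yz unfolding Y_def
        by (intro exI[of _ "emb ` C"]) (auto intro: connected_continuous_image continuous_on_emb)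
    qed (use d in auto)
  qed
  obtain d where d: "d > 0" "\<forall>y\<in>Y. \<forall>z\<in>Y. dist y z < d \<longrightarrow>
           (\<exists>g. path g \<and> pathstart g = y \<and> pathfinish g = z \<and> path_image g \<subseteq> Y \<and> path_image g \<subseteq> cball y (5*e))"
    using small_paths_banach[OF cY ULC assms(3)] by blast
  show ?thesis
  proof (intro exI[of _ d] conjI ballI impI)
    fix y z assume yz: "y \<in> X" "z \<in> X" "dist y z < d"
    then obtain g where g: "path g" "pathstart g = emb y" "pathfinish g = emb z" "path_image g \<subseteq> Y"
        "path_image g \<subseteq> cball (emb y) (5*e)"
      using d(2)[rule_format, of "emb y" "emb z"] yz unfolding Y_def by auto
    have sub: "path_image g \<subseteq> range emb" using g(4) unfolding Y_def by auto
    have "path (embinv \<circ> g)"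
      unfolding path_def
      by (rule continuous_on_compose[OF g(1)[unfolded path_def]])
         (use continuous_on_embinv[OF sub] in \<open>simp add: path_image_def\<close>)
    moreover have "path_image (embinv \<circ> g) \<subseteq> X \<and> path_image (embinv \<circ> g) \<subseteq> cball y (5*e)"
    proof -
      have "embinv u \<in> X \<and> embinv u \<in> cball y (5*e)" if u: "u \<in> path_image g" for u
      proof -
        obtain x where "x \<in> X" "u = emb x" using g(4) u unfolding Y_def by auto
        then show ?thesis using g(5) u by auto
      qed
      then show ?thesis unfolding path_image_compose by auto
    qed
    ultimately show "\<exists>g. path g \<and> pathstart g = y \<and> pathfinish g = z \<and> path_image g \<subseteq> X \<and> path_image g \<subseteq> cball y (5*e)"
      using g(2,3) by (intro exI[of _ "embinv \<circ> g"]) (auto simp: pathstart_compose pathfinish_compose)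
  qed (use d in auto)
qed

lemma peano_lpc:
  fixes X :: "'a::metric_space set"
  assumes "compact X" "locally connected X"
  shows "locally path_connected X"
  unfolding locally_path_connected_im_kleinen
proof (intro allI impI, elim conjE)
  fix v x assume v: "openin (top_of_set X) v" and "x \<in> v"
  then obtain r where "r > 0" "ball x r \<inter> X \<subseteq> v"
    unfolding openin_contains_ball by blast
  obtain d where d: "d > 0" "\<forall>y\<in>X. \<forall>z\<in>X. dist y z < d \<longrightarrow>
           (\<exists>g. path g \<and> pathstart g = y \<and> pathfinish g = z \<and> path_image g \<subseteq> X \<and> path_image g \<subseteq> cball y (5*(r/10)))"
    using small_paths[OF assms, of "r/10"] \<open>r > 0\<close> by auto
  have xX: "x \<in> X" using v \<open>x \<in> v\<close> openin_imp_subset by blast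
  show "\<exists>u. openin (top_of_set X) u \<and> x \<in> u \<and> u \<subseteq> v \<and>
           (\<forall>y. y \<in> u \<longrightarrow> (\<exists>p. path p \<and> path_image p \<subseteq> v \<and> pathstart p = x \<and> pathfinish p = y))"
  proof (intro exI[of _ "X \<inter> ball x (min d r)"] conjI allI impI)
    show "openin (top_of_set X) (X \<inter> ball x (min d r))" by (simp add: openin_open_Int)
    show "x \<in> X \<inter> ball x (min d r)" using xX d(1) \<open>r > 0\<close> by simp
    show "X \<inter> ball x (min d r) \<subseteq> v" using \<open>ball x r \<inter> X \<subseteq> v\<close> by auto
    fix y assume "y \<in> X \<inter> ball x (min d r)"
    then have y: "y \<in> X" "dist x y < d" by auto
    obtain g where g: "path g" "pathstart g = x" "pathfinish g = y" "path_image g \<subseteq> X" "path_image g \<subseteq> cball x (5*(r/10))"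
      using d(2)[rule_format, OF xX y] by blast
    have "path_image g \<subseteq> v"
      using g(4,5) \<open>ball x r \<inter> X \<subseteq> v\<close> \<open>r > 0\<close> by (auto simp: subset_iff)
    then show "\<exists>p. path p \<and> path_image p \<subseteq> v \<and> pathstart p = x \<and> pathfinish p = y"
      using g by blast
  qed
qed


lemma path_contains_arc_metric:
  fixes p :: "real \<Rightarrow> 'a::metric_space"
  assumes "path p" "pathstart p = a" "pathfinish p = b" "a \<noteq> b"
  obtains q where "arc q" "path_image q \<subseteq> path_image p" "pathstart q = a" "pathfinish q = b"
proof -
  have pp: "path (emb \<circ> p)"
    by (rule path_continuous_image[OF assms(1) continuous_on_emb])
  have ab: "pathstart (emb \<circ> p) = emb a" "pathfinish (emb \<circ> p) = emb b" "emb a \<noteq> emb b"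
    using assms(2-4) by (auto simp: pathstart_compose pathfinish_compose dest: injD[OF inj_emb])
  obtain q' where q': "arc q'" "path_image q' \<subseteq> path_image (emb \<circ> p)"
      "pathstart q' = emb a" "pathfinish q' = emb b"
    by (rule path_contains_arc[OF pp ab])
  have sub: "path_image q' \<subseteq> range emb"
    using q'(2) by (auto simp: path_image_compose)
  have "arc (embinv \<circ> q')"
    unfolding arc_def
  proof
    show "path (embinv \<circ> q')"
      by (rule path_continuous_image[OF arc_imp_path[OF q'(1)] continuous_on_embinv[OF sub]])
    show "inj_on (embinv \<circ> q') {0..1}"
    proof (rule comp_inj_on)
      show "inj_on q' {0..1}" using q'(1) by (simp add: arc_def)
      show "inj_on embinv (q' ` {0..1})"
      proof (rule inj_onI)
        fix u v assume "u \<in> q' ` {0..1}" "v \<in> q' ` {0..1}" "embinv u = embinv v"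
        moreover obtain u' v' where "u = emb u'" "v = emb v'"
          using sub \<open>u \<in> q' ` {0..1}\<close> \<open>v \<in> q' ` {0..1}\<close> unfolding path_image_def by blast
        ultimately show "u = v" by simp
      qed
    qed
  qed
  moreover have "path_image (embinv \<circ> q') \<subseteq> path_image p"
    using q'(2) by (auto simp: path_image_compose)
  ultimately show ?thesis
    using q'(3,4) that by (simp add: pathstart_compose pathfinish_compose)
qed

lemma arc_in_open_connected:
  fixes D :: "'a::metric_space set"
  assumes "compact D" "locally connected D" "openin (top_of_set D) U" "connected U"
    "p \<in> U" "q \<in> U" "p \<noteq> q"
  obtains \<gamma> where "arc \<gamma>" "path_image \<gamma> \<subseteq> U" "pathstart \<gamma> = p" "pathfinish \<gamma> = q"
proof -
  have "locally path_connected U"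
    using locally_open_subset[OF peano_lpc[OF assms(1,2)] assms(3)] .
  then have "path_component_set U p = U"
    using path_component_eq_connected_component_set connected_component_eq_self assms(4,5) by metis
  then have "path_component U p q" using assms(6) by blast
  then obtain g where "path g" "path_image g \<subseteq> U" "pathstart g = p" "pathfinish g = q"
    unfolding path_component_def by blast
  then obtain \<gamma> where "arc \<gamma>" "path_image \<gamma> \<subseteq> path_image g" "pathstart \<gamma> = p" "pathfinish \<gamma> = q"
    using path_contains_arc_metric[of g p q] assms(7) by blast
  then show ?thesis
    using that \<open>path_image g \<subseteq> U\<close> by blast
qed

lemma arc_comp_linepath:
  fixes g :: "real \<Rightarrow> 'a::topological_space"
  assumes "arc g" "a \<in> {0..1}" "b \<in> {0..1}" "a \<noteq> b"
  shows "arc (g \<circ> linepath a b)" "pathstart (g \<circ> linepath a b) = g a"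
    "pathfinish (g \<circ> linepath a b) = g b" "path_image (g \<circ> linepath a b) = g ` closed_segment a b"
proof -
  have seg: "closed_segment a b \<subseteq> {0..1}"
    using assms(2,3) by (simp add: closed_segment_subset)
  show "arc (g \<circ> linepath a b)"
    unfolding arc_def
  proof
    show "path (g \<circ> linepath a b)"
      using assms(1) seg by (intro path_continuous_image) (auto simp: arc_def path_def intro: continuous_on_subset)
    show "inj_on (g \<circ> linepath a b) {0..1}"
    proof (rule comp_inj_on)
      show "inj_on (linepath a b) {0..1}" using arc_linepath[OF assms(4)] by (simp add: arc_def)
      have "linepath a b ` {0..1} = closed_segment a b"
        using path_image_linepath by (simp add: path_image_def)
      then show "inj_on g (linepath a b ` {0..1})"
        using assms(1) seg by (auto simp: arc_def intro: inj_on_subset)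
    qed
  qed
  show "pathstart (g \<circ> linepath a b) = g a" "pathfinish (g \<circ> linepath a b) = g b"
    by (simp_all add: pathstart_compose pathfinish_compose)
  show "path_image (g \<circ> linepath a b) = g ` closed_segment a b"
    by (simp add: path_image_compose)
qed


lemma arc_in_connected:
  fixes D :: "'a::metric_space set"
  assumes dD: "dendrite D" and g: "arc \<gamma>" "path_image \<gamma> \<subseteq> D"
    and K: "connected K" "K \<subseteq> D" "pathstart \<gamma> \<in> K" "pathfinish \<gamma> \<in> K"
  shows "path_image \<gamma> \<subseteq> K"
proof (rule ccontr)
  assume "\<not> path_image \<gamma> \<subseteq> K"
  then obtain t where t: "t \<in> {0..1}" "\<gamma> t \<notin> K" unfolding path_image_def by blast
  define p where "p = \<gamma> 0"
  define q where "q = \<gamma> 1"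
  define z where "z = \<gamma> t"
  have cD: "compact D" and lcD: "locally connected D" and noC: "\<not> (\<exists>C. C \<subseteq> D \<and> simple_closed_curve C)"
    using dD by (auto simp: dendrite_def continuum_def)
  have pK: "p \<in> K" and qK: "q \<in> K" using K by (auto simp: p_def q_def pathstart_def pathfinish_def)
  have "p \<noteq> q" using arc_distinct_ends[OF g(1)] by (simp add: p_def q_def pathstart_def pathfinish_def)
  have injg: "inj_on \<gamma> {0..1}" using g(1) by (simp add: arc_def)
  have contg: "continuous_on {0..1} \<gamma>" using g(1) by (simp add: arc_def path_def)
  have zD: "z \<in> D" using g(2) t(1) by (auto simp: z_def path_image_def)
  define U where "U = connected_component_set (D - {z}) p"
  have "openin (top_of_set D) (D - {z})"
    by (metis Diff_eq closed_singleton open_Compl openin_open_Int)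
  moreover have "p \<in> D - {z}" using pK K(2) t(2) by (auto simp: z_def)
  ultimately have Uo: "openin (top_of_set D) U"
    unfolding U_def using locally_connected_2[OF lcD] by blast
  have Uc: "connected U" unfolding U_def by simp
  have KU: "K \<subseteq> U" unfolding U_def
    by (rule connected_component_maximal) (use pK K t in \<open>auto simp: z_def\<close>)
  obtain \<delta> where d: "arc \<delta>" "path_image \<delta> \<subseteq> U" "pathstart \<delta> = p" "pathfinish \<delta> = q"
    using arc_in_open_connected[OF cD lcD Uo Uc] KU pK qK \<open>p \<noteq> q\<close> by blast
  have zd: "z \<notin> path_image \<delta>"
    using d(2) connected_component_subset[of "D - {z}" p] unfolding U_def by blast
  define S where "S = {0..1} \<inter> \<gamma> -` path_image \<delta>"
  have Sc: "closed S"
    unfolding S_def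
    by (rule continuous_closed_preimage[OF contg]) (auto intro: compact_imp_closed compact_path_image arc_imp_path d(1))
  have S0: "0 \<in> S" and S1: "1 \<in> S"
    using d(3,4) pathstart_in_path_image[of \<delta>] pathfinish_in_path_image[of \<delta>]
    by (auto simp: S_def p_def q_def)
  have tS: "t \<notin> S" using zd by (simp add: S_def z_def)
  define t1 where "t1 = Sup (S \<inter> {0..t})"
  define t2 where "t2 = Inf (S \<inter> {t..1})"
  have t1S: "t1 \<in> S \<inter> {0..t}"
    unfolding t1_def using S0 t(1) Sc by (intro closed_contains_Sup) (auto intro: closed_Int bdd_aboveI[of _ t])
  have t2S: "t2 \<in> S \<inter> {t..1}"
    unfolding t2_def using S1 t(1) Sc by (intro closed_contains_Inf) (auto intro: closed_Int bdd_belowI[of _ t])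
  have t1t: "t1 < t" using t1S tS by (cases "t1 = t") auto
  have t2t: "t < t2" using t2S tS by (cases "t2 = t") auto
  have gap: "u \<notin> S" if "t1 < u" "u < t2" for u
  proof
    assume "u \<in> S"
    show False
    proof (cases "u \<le> t")
      case True
      then have "u \<le> t1" unfolding t1_def using \<open>u \<in> S\<close> \<open>t1 < u\<close> t1S
        by (intro cSup_upper) (auto simp: S_def intro: bdd_aboveI[of _ t])
      then show False using \<open>t1 < u\<close> by simp
    next
      case False
      then have "t2 \<le> u" unfolding t2_def using \<open>u \<in> S\<close> \<open>u < t2\<close> t2S
        by (intro cInf_lower) (auto simp: S_def intro: bdd_belowI[of _ t])
      then show False using \<open>u < t2\<close> by simp
    qed
  qed
  obtain s1 where s1: "s1 \<in> {0..1}" "\<delta> s1 = \<gamma> t1"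
    using t1S unfolding S_def path_image_def by auto
  obtain s2 where s2: "s2 \<in> {0..1}" "\<delta> s2 = \<gamma> t2"
    using t2S unfolding S_def path_image_def by auto
  have t12: "t1 \<in> {0..1}" "t2 \<in> {0..1}" "t1 \<noteq> t2" using t1S t2S t1t t2t by (auto simp: S_def)
  have "\<gamma> t1 \<noteq> \<gamma> t2" using injg t12 by (auto dest: inj_onD)
  then have "s1 \<noteq> s2" using s1 s2 by auto
  define \<alpha> where "\<alpha> = \<gamma> \<circ> linepath t1 t2"
  define \<beta> where "\<beta> = \<delta> \<circ> linepath s2 s1"
  note A = arc_comp_linepath[OF g(1) t12, folded \<alpha>_def]
  note B = arc_comp_linepath[OF d(1) s2(1) s1(1) \<open>s1 \<noteq> s2\<close>[symmetric], folded \<beta>_def]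
  have "simple_path (\<alpha> +++ \<beta>)"
  proof (rule simple_path_join_loop)
    show "arc \<alpha>" "arc \<beta>" using A B by auto
    show "pathfinish \<alpha> = pathstart \<beta>" "pathfinish \<beta> = pathstart \<alpha>" using A B s1 s2 by auto
    show "path_image \<alpha> \<inter> path_image \<beta> \<subseteq> {pathstart \<alpha>, pathstart \<beta>}"
    proof
      fix w assume w: "w \<in> path_image \<alpha> \<inter> path_image \<beta>"
      then obtain u where u: "u \<in> closed_segment t1 t2" "w = \<gamma> u" using A by auto
      have "u \<in> {t1..t2}" using u(1) t1t t2t by (simp add: closed_segment_eq_real_ivl)
      moreover have "w \<in> path_image \<delta>"
        using w B d(1) s1 s2 closed_segment_subset[of s2 "{0..1}" s1]
        by (auto simp: path_image_def)
      then have "u \<in> S" using u \<open>u \<in> {t1..t2}\<close> t12 by (auto simp: S_def)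
      ultimately have "u = t1 \<or> u = t2" using gap by force
      then show "w \<in> {pathstart \<alpha>, pathstart \<beta>}" using u A B s2 by auto
    qed
  qed
  moreover have loop: "pathfinish (\<alpha> +++ \<beta>) = pathstart (\<alpha> +++ \<beta>)"
    using A B s1 by simp
  ultimately have "path_image (\<alpha> +++ \<beta>) homeomorphic sphere (0::complex) 1"
    by (intro homeomorphic_simple_path_image_circle) auto
  moreover have "path_image (\<alpha> +++ \<beta>) \<subseteq> D"
  proof -
    have "path_image \<alpha> \<subseteq> D"
      using A g(2) closed_segment_subset[of t1 "{0..1}" t2] t12 by (auto simp: path_image_def)
    moreover have "path_image \<beta> \<subseteq> D"
      using B d(2) Uo openin_imp_subset closed_segment_subset[of s2 "{0..1}" s1] s1 s2
      by (fastforce simp: path_image_def)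
    ultimately show ?thesis
      using A B s2 by (subst path_image_join) auto
  qed
  ultimately show False
    using noC unfolding simple_closed_curve_def by blast
qed


definition seg :: "'a::metric_space set \<Rightarrow> 'a \<Rightarrow> 'a \<Rightarrow> 'a set" where
  "seg D x y = \<Inter>{K. K \<subseteq> D \<and> connected K \<and> x \<in> K \<and> y \<in> K}"

lemma seg_min: "K \<subseteq> D \<Longrightarrow> connected K \<Longrightarrow> x \<in> K \<Longrightarrow> y \<in> K \<Longrightarrow> seg D x y \<subseteq> K"
  unfolding seg_def by blast

lemma seg_sym: "seg D x y = seg D y x"
  unfolding seg_def by meson

lemma seg_arc:
  assumes "dendrite D" "arc \<gamma>" "path_image \<gamma> \<subseteq> D"
  shows "seg D (pathstart \<gamma>) (pathfinish \<gamma>) = path_image \<gamma>"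
proof
  show "seg D (pathstart \<gamma>) (pathfinish \<gamma>) \<subseteq> path_image \<gamma>"
    by (rule seg_min) (use assms in \<open>auto intro: connected_path_image arc_imp_path\<close>)
  show "path_image \<gamma> \<subseteq> seg D (pathstart \<gamma>) (pathfinish \<gamma>)"
    unfolding seg_def using arc_in_connected[OF assms] by blast
qed

lemma seg_refl:
  assumes "x \<in> D" shows "seg D x x = {x}"
proof
  show "seg D x x \<subseteq> {x}" by (rule seg_min) (use assms in auto)
  show "{x} \<subseteq> seg D x x" unfolding seg_def by blast
qed

lemma dendrite_arc:
  assumes "dendrite D" "x \<in> D" "y \<in> D" "x \<noteq> y"
  obtains \<gamma> where "arc \<gamma>" "path_image \<gamma> \<subseteq> D" "pathstart \<gamma> = x" "pathfinish \<gamma> = y"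
proof -
  have "compact D" "locally connected D" "connected D"
    using assms(1) by (auto simp: dendrite_def continuum_def)
  then show ?thesis
    using arc_in_open_connected[of D D x y] assms that by auto
qed

lemma seg_props:
  assumes "dendrite D" "x \<in> D" "y \<in> D"
  shows "seg D x y \<subseteq> D" "compact (seg D x y)" "connected (seg D x y)" "x \<in> seg D x y" "y \<in> seg D x y"
proof -
  have "seg D x y \<subseteq> D \<and> compact (seg D x y) \<and> connected (seg D x y) \<and> x \<in> seg D x y \<and> y \<in> seg D x y"
  proof (cases "x = y")
    case True
    then show ?thesis using seg_refl[OF assms(2)] assms(2) by simp
  next
    case False
    then obtain \<gamma> where g: "arc \<gamma>" "path_image \<gamma> \<subseteq> D" "pathstart \<gamma> = x" "pathfinish \<gamma> = y"
      using dendrite_arc assms by metis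
    then have "seg D x y = path_image \<gamma>" using seg_arc[OF assms(1) g(1,2)] by simp
    then show ?thesis using g
      by (auto intro: compact_path_image connected_path_image arc_imp_path pathstart_in_path_image pathfinish_in_path_image
          simp del: pathstart_in_path_image pathfinish_in_path_image)
  qed
  then show "seg D x y \<subseteq> D" "compact (seg D x y)" "connected (seg D x y)" "x \<in> seg D x y" "y \<in> seg D x y"
    by auto
qed

lemma seg_sub:
  assumes "dendrite D" "arc \<gamma>" "path_image \<gamma> \<subseteq> D" "u \<in> {0..1}" "v \<in> {0..1}"
  shows "seg D (\<gamma> u) (\<gamma> v) = \<gamma> ` closed_segment u v"
proof (cases "u = v")
  case True
  have "\<gamma> u \<in> D" using assms(3,4) by (auto simp: path_image_def)
  then show ?thesis using True seg_refl by simp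
next
  case False
  note A = arc_comp_linepath[OF assms(2,4,5) False]
  have "path_image (\<gamma> \<circ> linepath u v) \<subseteq> D"
    using A(4) assms(3-5) closed_segment_subset[of u "{0..1}" v] by (auto simp: path_image_def)
  then show ?thesis
    using seg_arc[OF assms(1) A(1)] A by simp
qed

lemma seg_mono:
  assumes "dendrite D" "a \<in> D" "z \<in> D" "y \<in> seg D a z"
  shows "seg D a y \<subseteq> seg D a z"
  by (rule seg_min) (use seg_props[OF assms(1-3)] assms(4) in auto)

lemma seg_antisym:
  assumes "dendrite D" "a \<in> D" "x \<in> D" "y \<in> D" "x \<in> seg D a y" "y \<in> seg D a x"
  shows "x = y"
proof (cases "a = y")
  case True
  then show ?thesis using assms(5) seg_refl[OF assms(2)] by simp
next
  case False
  then obtain \<gamma> where g: "arc \<gamma>" "path_image \<gamma> \<subseteq> D" "pathstart \<gamma> = a" "pathfinish \<gamma> = y"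
    using dendrite_arc assms by metis
  have sy: "seg D a y = \<gamma> ` {0..1}"
    using seg_arc[OF assms(1) g(1,2)] g by (simp add: path_image_def)
  then obtain v where v: "v \<in> {0..1}" "x = \<gamma> v" using assms(5) by auto
  have "seg D a x = \<gamma> ` closed_segment 0 v"
    using seg_sub[OF assms(1) g(1,2), of 0 v] v g(3) by (simp add: pathstart_def)
  then obtain w where w: "w \<in> closed_segment 0 v" "y = \<gamma> w" using assms(6) by auto
  have w01: "w \<in> {0..1}" "w \<le> v" using w(1) v(1) by (auto simp: closed_segment_eq_real_ivl)
  have "\<gamma> w = \<gamma> 1" using w g(4) by (simp add: pathfinish_def)
  then have "w = 1" using g(1) w01 by (auto simp: arc_def dest: inj_onD)
  then have "v = 1" using w01 v by simp
  then show ?thesis using v g(4) by (simp add: pathfinish_def)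
qed


lemma dendrite_parts:
  assumes "dendrite D"
  shows "compact D" "closed D" "locally connected D" "connected D"
  using assms by (auto simp: dendrite_def continuum_def compact_imp_closed)

lemma seg_union:
  assumes "dendrite D" "a \<in> D" "b \<in> D" "c \<in> D"
  shows "seg D a c \<subseteq> seg D a b \<union> seg D b c"
proof (rule seg_min)
  note P1 = seg_props[OF assms(1,2,3)] and P2 = seg_props[OF assms(1,3,4)]
  show "seg D a b \<union> seg D b c \<subseteq> D" using P1 P2 by auto
  show "connected (seg D a b \<union> seg D b c)"
    using P1 P2 by (intro connected_Un) auto
  show "a \<in> seg D a b \<union> seg D b c" "c \<in> seg D a b \<union> seg D b c" using P1 P2 by auto
qed

lemma local_conn_nbhd:
  assumes "locally connected D" "y \<in> D" "\<rho> > 0"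
  obtains V where "open V" "y \<in> V" "connected (D \<inter> V)" "D \<inter> V \<subseteq> ball y \<rho>"
proof -
  have "openin (top_of_set D) (D \<inter> ball y \<rho>)" by (simp add: openin_open_Int)
  moreover have "y \<in> D \<inter> ball y \<rho>" using assms by simp
  ultimately obtain u where u: "openin (top_of_set D) u" "connected u" "y \<in> u" "u \<subseteq> D \<inter> ball y \<rho>"
    using assms(1) unfolding locally_connected by meson
  then obtain V where "open V" "u = D \<inter> V" by (meson openin_open)
  then show ?thesis using u that by auto
qed

lemma seg_limit:
  fixes D :: "'a::metric_space set"
  assumes dD: "dendrite D" and aD: "a \<in> D" and xs: "xs \<longlonglongrightarrow> x" and ys: "ys \<longlonglongrightarrow> y"
    and yD: "\<And>k. ys k \<in> D" and xin: "\<And>k. xs k \<in> seg D a (ys k)"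
  shows "x \<in> seg D a y"
proof (rule ccontr)
  assume nx: "x \<notin> seg D a y"
  have "y \<in> D" using yD ys dendrite_parts(2)[OF dD] closed_sequential_limits by blast
  note Py = seg_props[OF dD aD \<open>y \<in> D\<close>]
  have "x \<noteq> y" using nx Py by auto
  have idp: "infdist x (seg D a y) > 0"
    using Py nx by (intro infdist_pos_not_in_closed) (auto intro: compact_imp_closed)
  define \<rho> where "\<rho> = min (dist x y) (infdist x (seg D a y)) / 3"
  have \<rho>: "\<rho> > 0" using idp \<open>x \<noteq> y\<close> by (simp add: \<rho>_def)
  obtain V where V: "open V" "y \<in> V" "connected (D \<inter> V)" "D \<inter> V \<subseteq> ball y \<rho>"
    using local_conn_nbhd[OF dendrite_parts(3)[OF dD] \<open>y \<in> D\<close> \<rho>] by metis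
  have "eventually (\<lambda>k. ys k \<in> V) sequentially" using ys V(1,2) by (rule topological_tendstoD)
  moreover have "eventually (\<lambda>k. dist (xs k) x < \<rho>) sequentially" using xs \<rho> by (rule tendstoD)
  ultimately obtain k where k: "ys k \<in> V" "dist (xs k) x < \<rho>"
    using eventually_happens'[OF sequentially_bot] eventually_conj by (metis (mono_tags, lifting))
  have "seg D y (ys k) \<subseteq> D \<inter> V"
    by (rule seg_min) (use V k yD \<open>y \<in> D\<close> in auto)
  moreover have "xs k \<in> seg D a y \<union> seg D y (ys k)"
    using seg_union[OF dD aD \<open>y \<in> D\<close> yD[of k]] xin[of k] by blast
  ultimately have "xs k \<in> seg D a y \<or> xs k \<in> ball y \<rho>" using V(4) by blast
  then show False
  proof
    assume "xs k \<in> seg D a y"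
    then have "infdist x (seg D a y) \<le> dist x (xs k)" by (rule infdist_le)
    then show False using k(2) \<rho>_def idp by (simp add: dist_commute)
  next
    assume "xs k \<in> ball y \<rho>"
    then have "dist x y \<le> dist x (xs k) + dist (xs k) y" by (simp add: dist_triangle)
    moreover have "dist (xs k) y < \<rho>" using \<open>xs k \<in> ball y \<rho>\<close> by (simp add: dist_commute)
    moreover have "\<rho> \<le> dist x y / 3" unfolding \<rho>_def by simp
    ultimately show False using k(2) \<rho> by (simp add: dist_commute)
  qed
qed


lemma chain_max:
  assumes "finite F" "F \<noteq> {}" "F \<subseteq> C" "\<forall>a\<in>C. \<forall>b\<in>C. (a, b) \<in> r \<or> (b, a) \<in> r" "trans r"
  shows "\<exists>m\<in>F. \<forall>c\<in>F. (c, m) \<in> r"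
  using assms(1,2,3)
proof (induction F rule: finite_ne_induct)
  case (singleton x)
  then show ?case using assms(4) by blast
next
  case (insert x F)
  then obtain m where m: "m \<in> F" "\<forall>c\<in>F. (c, m) \<in> r" by auto
  have "x \<in> C" "m \<in> C" using insert m by auto
  show ?case
  proof (cases "(m, x) \<in> r")
    case True
    have "(c, x) \<in> r" if "c \<in> insert x F" for c
    proof (cases "c = x")
      case True
      then show ?thesis using assms(4) \<open>x \<in> C\<close> by blast
    next
      case False
      then have "(c, m) \<in> r" using that m by blast
      then show ?thesis using True assms(5) by (meson transD)
    qed
    then show ?thesis by blast
  next
    case False
    then have "(x, m) \<in> r" using assms(4) \<open>x \<in> C\<close> \<open>m \<in> C\<close> by blast
    then show ?thesis using m by blast
  qed
qed

theorem dendrite_fixed_point: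
  fixes D :: "'a::metric_space set" and f :: "'a \<Rightarrow> 'a"
  assumes dD: "dendrite D" and KD: "K \<subseteq> D" and Kne: "K \<noteq> {}" and Kc: "closed K"
    and Kconv: "\<And>x y. x \<in> K \<Longrightarrow> y \<in> K \<Longrightarrow> seg D x y \<subseteq> K"
    and fc: "continuous_on K f" and fK: "f ` K \<subseteq> K"
  shows "\<exists>x\<in>K. f x = x"
proof (rule ccontr)
  assume "\<not> (\<exists>x\<in>K. f x = x)"
  then have nf: "\<And>x. x \<in> K \<Longrightarrow> f x \<noteq> x" by blast
  obtain a where aK: "a \<in> K" using Kne by blast
  have aD: "a \<in> D" using aK KD by blast
  note cD = dendrite_parts(1)[OF dD] and clD = dendrite_parts(2)[OF dD] and lcD = dendrite_parts(3)[OF dD]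
  define E where "E = {x \<in> K. x \<in> seg D a (f x)}"
  have fKD: "f x \<in> D" if "x \<in> K" for x using fK KD that by blast
  have aE: "a \<in> E" using seg_props[OF dD aD fKD[OF aK]] aK by (simp add: E_def)
  have EK: "E \<subseteq> K" by (auto simp: E_def)
  have Ec: "closed E"
    unfolding closed_sequential_limits
  proof (intro allI impI, elim conjE)
    fix xs x assume xs: "\<forall>n. xs n \<in> E" "xs \<longlonglongrightarrow> x"
    have xsK: "\<forall>n. xs n \<in> K" using xs(1) EK by blast
    have xK: "x \<in> K" using Kc xsK xs(2) closed_sequential_limits by blast
    have "(\<lambda>n. f (xs n)) \<longlonglongrightarrow> f x"
      using fc xsK xK xs(2) unfolding continuous_on_sequentially by (auto simp: comp_def)
    then have "x \<in> seg D a (f x)"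
      by (rule seg_limit[OF dD aD xs(2)]) (use xs(1) fKD xsK in \<open>auto simp: E_def\<close>)
    then show "x \<in> E" using xK by (simp add: E_def)
  qed
  have Tc: "closed {y \<in> D. c \<in> seg D a y}" for c
    unfolding closed_sequential_limits
  proof (intro allI impI, elim conjE)
    fix ys y assume ys: "\<forall>n. ys n \<in> {y \<in> D. c \<in> seg D a y}" "ys \<longlonglongrightarrow> y"
    have "y \<in> D" using clD ys closed_sequential_limits by blast
    moreover have "c \<in> seg D a y"
      by (rule seg_limit[OF dD aD tendsto_const ys(2)]) (use ys(1) in auto)
    ultimately show "y \<in> {y \<in> D. c \<in> seg D a y}" by simp
  qed
  define r where "r = {(x, y). x \<in> E \<and> y \<in> E \<and> x \<in> seg D a y}"
  have refl: "(x, x) \<in> r" if "x \<in> E" for x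
    using that seg_props[OF dD aD, of x] EK KD by (auto simp: r_def)
  have Fr: "Field r = E"
    using refl by (auto simp: Field_def r_def)
  have tr: "trans r"
  proof (rule transI)
    fix x y z assume "(x, y) \<in> r" "(y, z) \<in> r"
    then show "(x, z) \<in> r"
      using seg_mono[OF dD aD, of z y] EK KD by (auto simp: r_def)
  qed
  have po: "Partial_order r"
    unfolding order_on_defs
  proof (intro conjI)
    show "r \<subseteq> Field r \<times> Field r" by (auto simp: Field_def)
    show "refl_on (Field r) r" unfolding Fr refl_on_def using refl by blast
    show "trans r" by (rule tr)
    show "antisym r"
    proof (rule antisymI)
      fix x y assume "(x, y) \<in> r" "(y, x) \<in> r"
      then show "x = y" using seg_antisym[OF dD aD] EK KD by (auto simp: r_def)
    qed
  qed
  have ub: "\<exists>u\<in>Field r. \<forall>c\<in>C. (c, u) \<in> r" if C: "C \<in> Chains r" for C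
  proof (cases "C = {}")
    case True
    then show ?thesis using aE Fr by auto
  next
    case False
    have ch: "\<forall>x\<in>C. \<forall>y\<in>C. (x, y) \<in> r \<or> (y, x) \<in> r" using C by (simp add: Chains_def)
    have CE: "C \<subseteq> E" using ch by (auto simp: r_def)
    define T where "T c = {y \<in> C. c \<in> seg D a y}" for c
    have "K \<inter> (\<Inter>c\<in>C. closure (T c)) \<noteq> {}"
    proof (rule compact_imp_fip_image)
      have "compact (K \<inter> D)" by (rule closed_Int_compact[OF Kc cD])
      moreover have "K \<inter> D = K" using KD by blast
      ultimately show "compact K" by simp
      show "closed (closure (T c))" for c by simp
      fix I' assume I': "finite I'" "I' \<subseteq> C"
      show "K \<inter> (\<Inter>c\<in>I'. closure (T c)) \<noteq> {}"
      proof (cases "I' = {}")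
        case True
        then show ?thesis using Kne by simp
      next
        case False
        obtain m where m: "m \<in> I'" "\<forall>c\<in>I'. (c, m) \<in> r"
          using chain_max[OF I'(1) False I'(2) ch tr] by blast
        have "m \<in> T c" if "c \<in> I'" for c
          using m that I'(2) by (auto simp: T_def r_def)
        then have "m \<in> K \<inter> (\<Inter>c\<in>I'. closure (T c))"
          using m(1) I'(2) CE EK closure_subset by blast
        then show ?thesis by blast
      qed
    qed
    then obtain s where s: "s \<in> K" "\<And>c. c \<in> C \<Longrightarrow> s \<in> closure (T c)" by blast
    obtain c0 where "c0 \<in> C" using False by blast
    have "T c0 \<subseteq> E" using CE by (auto simp: T_def)
    then have "s \<in> E" using s(2)[OF \<open>c0 \<in> C\<close>] closure_minimal[OF _ Ec] by blast
    moreover have "c \<in> seg D a s" if "c \<in> C" for c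
    proof -
      have "T c \<subseteq> {y \<in> D. c \<in> seg D a y}" using CE EK KD by (auto simp: T_def)
      then have "closure (T c) \<subseteq> {y \<in> D. c \<in> seg D a y}" by (rule closure_minimal[OF _ Tc])
      then show ?thesis using s(2)[OF that] by blast
    qed
    ultimately show ?thesis using CE Fr by (auto simp: r_def)
  qed
  obtain m where m: "m \<in> Field r" "\<And>x. x \<in> Field r \<Longrightarrow> (m, x) \<in> r \<Longrightarrow> x = m"
    using Zorns_po_lemma[OF po ub] by blast
  have mE: "m \<in> E" using m(1) Fr by simp
  then have mK: "m \<in> K" and mseg: "m \<in> seg D a (f m)" by (auto simp: E_def)
  define fm where "fm = f m"
  have fmK: "fm \<in> K" using fK mK by (auto simp: fm_def)
  have mfm: "m \<noteq> fm" using nf[OF mK] by (simp add: fm_def)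
  have "a \<noteq> fm"
  proof
    assume "a = fm"
    then have "m = a" using mseg seg_refl[OF aD] by (simp add: fm_def)
    then show False using \<open>a = fm\<close> mfm by simp
  qed
  then obtain \<gamma> where g: "arc \<gamma>" "path_image \<gamma> \<subseteq> D" "pathstart \<gamma> = a" "pathfinish \<gamma> = fm"
    using dendrite_arc[OF dD aD] fmK KD by blast
  have g0: "\<gamma> 0 = a" and g1: "\<gamma> 1 = fm" using g by (auto simp: pathstart_def pathfinish_def)
  have sfm: "seg D a fm = \<gamma> ` {0..1}"
    using seg_arc[OF dD g(1,2)] g by (simp add: path_image_def)
  then obtain s where s: "s \<in> {0..1}" "m = \<gamma> s" using mseg by (auto simp: fm_def)
  have "s \<noteq> 1" using s mfm g1 by auto
  define \<rho> where "\<rho> = dist m fm / 2"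
  have \<rho>: "\<rho> > 0" using mfm by (simp add: \<rho>_def)
  have fmD: "fm \<in> D" using fmK KD by blast
  obtain V where V: "open V" "fm \<in> V" "connected (D \<inter> V)" "D \<inter> V \<subseteq> ball fm \<rho>"
    using local_conn_nbhd[OF lcD fmD \<rho>] by metis
  obtain e0 where e0: "e0 > 0" "ball fm e0 \<subseteq> V" using V(1,2) open_contains_ball by blast
  obtain \<eta> where \<eta>: "\<eta> > 0" "\<And>x. x \<in> K \<Longrightarrow> dist x m < \<eta> \<Longrightarrow> dist (f x) fm < e0"
    using continuous_on_iff[THEN iffD1, OF fc, rule_format, OF mK e0(1)] unfolding fm_def by blast
  have "continuous_on {0..1} \<gamma>" using g(1) by (simp add: arc_def path_def)
  then obtain \<tau> where \<tau>: "\<tau> > 0" "\<And>t. t \<in> {0..1} \<Longrightarrow> dist t s < \<tau> \<Longrightarrow> dist (\<gamma> t) (\<gamma> s) < min \<eta> \<rho>"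
    using continuous_on_iff[THEN iffD1, OF \<open>continuous_on {0..1} \<gamma>\<close>, rule_format, OF s(1), of "min \<eta> \<rho>"] \<eta>(1) \<rho> by auto
  define t where "t = min 1 (s + \<tau>/2)"
  have t: "t \<in> {0..1}" "s < t" "dist t s < \<tau>"
    using s(1) \<tau>(1) \<open>s \<noteq> 1\<close> by (auto simp: t_def dist_real_def)
  define x where "x = \<gamma> t"
  have xm: "dist x m < \<eta>" "dist x m < \<rho>" using \<tau>(2)[OF t(1,3)] s(2) by (auto simp: x_def)
  have xseg: "x \<in> seg D a fm" using sfm t(1) by (auto simp: x_def)
  have xK: "x \<in> K" using xseg Kconv[OF aK fmK] by blast
  have fxV: "f x \<in> D \<inter> V" using \<eta>(2)[OF xK xm(1)] e0(2) fKD[OF xK] by (auto simp: dist_commute)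
  have "x \<noteq> m"
  proof
    assume "x = m"
    then have "\<gamma> t = \<gamma> s" using s(2) by (simp add: x_def)
    then have "t = s" using g(1) t(1) s(1) by (auto simp: arc_def dest: inj_onD)
    then show False using t(2) by simp
  qed
  have "seg D a x = \<gamma> ` closed_segment 0 t"
    using seg_sub[OF dD g(1,2), of 0 t] t(1) g0 by (simp add: x_def)
  then have max: "m \<in> seg D a x"
    using s t by (auto simp: closed_segment_eq_real_ivl)
  have "seg D (f x) fm \<subseteq> D \<inter> V"
    by (rule seg_min) (use V fxV fmD in auto)
  moreover have "x \<in> seg D a (f x) \<union> seg D (f x) fm"
    using seg_union[OF dD aD fKD[OF xK] fmD] xseg by blast
  moreover have "x \<notin> ball fm \<rho>"
  proof
    assume "x \<in> ball fm \<rho>"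
    then have "dist fm x < \<rho>" by simp
    moreover have "dist m fm \<le> dist m x + dist x fm" by (rule dist_triangle)
    ultimately show False using xm(2) \<rho>_def by (simp add: dist_commute)
  qed
  ultimately have "x \<in> seg D a (f x)" using V(4) by blast
  then have xE: "x \<in> E" using xK by (simp add: E_def)
  then have "(m, x) \<in> r" using mE max by (simp add: r_def)
  then have "x = m" using m(2) xE Fr by simp
  then show False using \<open>x \<noteq> m\<close> by simp
qed


lemma setdist_pos_compact:
  fixes S T :: "'a::metric_space set"
  assumes "compact S" "compact T" "S \<noteq> {}" "T \<noteq> {}" "S \<inter> T = {}"
  shows "setdist S T > 0"
proof -
  have cpt: "compact (S \<times> T)" using assms(1,2) by (rule compact_Times)
  have ne: "S \<times> T \<noteq> {}" using assms(3,4) by simp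
  have cont: "continuous_on (S \<times> T) (\<lambda>p. dist (fst p) (snd p))"
    by (intro continuous_on_dist continuous_on_fst continuous_on_snd continuous_on_id)
  obtain p where p1: "p \<in> S \<times> T" and p2: "\<forall>q\<in>S \<times> T. dist (fst p) (snd p) \<le> dist (fst q) (snd q)"
    using continuous_attains_inf[OF cpt ne cont] by auto
  have pos: "dist (fst p) (snd p) > 0" using p1 assms(5) by (cases p) auto
  have "dist (fst p) (snd p) \<le> setdist S T"
  proof (rule le_setdistI[OF assms(3,4)])
    fix x y assume "x \<in> S" "y \<in> T"
    then have "(x, y) \<in> S \<times> T" by simp
    then show "dist (fst p) (snd p) \<le> dist x y" using p2 by fastforce
  qed
  then show ?thesis using pos by linarith
qed

definition sconv :: "'a::metric_space set \<Rightarrow> 'a set \<Rightarrow> bool" where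
  "sconv D S \<longleftrightarrow> S \<subseteq> D \<and> (\<forall>x\<in>S. \<forall>y\<in>S. seg D x y \<subseteq> S)"

lemma helly3:
  assumes dD: "dendrite D" and "sconv D A" "sconv D B" "sconv D C"
    and "A \<inter> B \<noteq> {}" "A \<inter> C \<noteq> {}" "B \<inter> C \<noteq> {}"
  shows "A \<inter> B \<inter> C \<noteq> {}"
proof -
  obtain a where a: "a \<in> B" "a \<in> C" using assms by blast
  obtain b where b: "b \<in> A" "b \<in> C" using assms by blast
  obtain c where c: "c \<in> A" "c \<in> B" using assms by blast
  have D: "a \<in> D" "b \<in> D" "c \<in> D" using a b c assms(2-4) by (auto simp: sconv_def)
  note Pab = seg_props[OF dD D(1,2)] and Pac = seg_props[OF dD D(1,3)] and Pcb = seg_props[OF dD D(3,2)]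
  have un: "seg D a b \<subseteq> seg D a c \<union> seg D c b" by (rule seg_union[OF dD D(1,3,2)])
  have "seg D a b \<inter> seg D a c \<inter> seg D c b \<noteq> {}"
  proof
    assume e: "seg D a b \<inter> seg D a c \<inter> seg D c b = {}"
    have "\<exists>A B. closed A \<and> closed B \<and> seg D a b \<subseteq> A \<union> B \<and> A \<inter> B \<inter> seg D a b = {} \<and>
               A \<inter> seg D a b \<noteq> {} \<and> B \<inter> seg D a b \<noteq> {}"
      using Pab Pac Pcb un e
      by (intro exI[of _ "seg D a c"] exI[of _ "seg D c b"]) (auto intro: compact_imp_closed)
    then show False using Pab(3) unfolding connected_closed by blast
  qed
  then obtain w where w: "w \<in> seg D a b" "w \<in> seg D a c" "w \<in> seg D c b" by blast
  have "w \<in> C" using w(1) a b assms(4) by (auto simp: sconv_def)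
  moreover have "w \<in> B" using w(2) a c assms(3) by (auto simp: sconv_def)
  moreover have "w \<in> A" using w(3) b c assms(2) by (auto simp: sconv_def)
  ultimately show ?thesis by blast
qed

lemma sconv_Int: "sconv D A \<Longrightarrow> sconv D B \<Longrightarrow> sconv D (A \<inter> B)"
  unfolding sconv_def by blast

lemma helly_finite:
  assumes dD: "dendrite D"
  shows "finite G \<Longrightarrow> G \<noteq> {} \<Longrightarrow> (\<forall>A\<in>G. sconv D A) \<Longrightarrow> (\<forall>A\<in>G. \<forall>B\<in>G. A \<inter> B \<noteq> {}) \<Longrightarrow> \<Inter>G \<noteq> {}"
proof (induction "card G" arbitrary: G rule: less_induct)
  case less
  show ?case
  proof (cases "\<exists>A\<in>G. \<exists>B\<in>G. A \<noteq> B")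
    case False
    then obtain A where "G = {A}" using less.prems(2) by blast
    then show ?thesis using less.prems(4) by simp
  next
    case True
    then obtain A B where AB: "A \<in> G" "B \<in> G" "A \<noteq> B" by blast
    define G' where "G' = insert (A \<inter> B) (G - {A, B})"
    have fin: "finite G'" using less.prems(1) by (simp add: G'_def)
    have c2: "card {A, B} \<le> card G"
      by (rule card_mono) (use AB less.prems(1) in auto)
    have "card (G - {A, B}) = card G - 2"
      using AB less.prems(1) by (simp add: card_Diff_subset)
    moreover have "card G' \<le> Suc (card (G - {A, B}))"
      unfolding G'_def using less.prems(1) by (simp add: card_insert_if)
    ultimately have cG': "card G' < card G" using c2 AB by simp
    have cv: "\<forall>X\<in>G'. sconv D X" using less.prems(3) AB by (auto simp: G'_def intro: sconv_Int)
    have pw: "\<forall>X\<in>G'. \<forall>Y\<in>G'. X \<inter> Y \<noteq> {}"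
    proof (intro ballI)
      fix X Y assume X: "X \<in> G'" and Y: "Y \<in> G'"
      have h: "A \<inter> B \<inter> Z \<noteq> {}" if "Z \<in> G" for Z
        using helly3[OF dD, of A B Z] less.prems(3,4) AB that by auto
      show "X \<inter> Y \<noteq> {}"
      proof (cases "X = A \<inter> B")
        case True
        show ?thesis
        proof (cases "Y = A \<inter> B")
          case True
          then show ?thesis using \<open>X = A \<inter> B\<close> less.prems(4) AB by auto
        next
          case False
          then have "Y \<in> G" using Y by (auto simp: G'_def)
          then show ?thesis using h \<open>X = A \<inter> B\<close> by blast
        qed
      next
        case False
        then have XG: "X \<in> G" using X by (auto simp: G'_def)
        show ?thesis
        proof (cases "Y = A \<inter> B")
          case True
          then show ?thesis using h[OF XG] by blast
        next
          case False
          then have "Y \<in> G" using Y by (auto simp: G'_def)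
          then show ?thesis using XG less.prems(4) by blast
        qed
      qed
    qed
    have "\<Inter>G' \<noteq> {}"
      by (rule less.hyps[OF cG' fin _ cv pw]) (simp add: G'_def)
    moreover have "\<Inter>G' = \<Inter>G" using AB by (auto simp: G'_def)
    ultimately show ?thesis by simp
  qed
qed


theorem lemma22:
  fixes D :: "'a::metric_space set" and f :: "'a \<Rightarrow> 'a"
  assumes "dendrite D" and "nondegenerate D"
    and "continuous_on D f" and "f ` D \<subseteq> D"
    and "\<And>S1 S2. subdendrite D S1 \<Longrightarrow> nondegenerate S1 \<Longrightarrow>
                 subdendrite D S2 \<Longrightarrow> nondegenerate S2 \<Longrightarrow>
                 liminf (\<lambda>n. ereal (setdist ((f ^^ n) ` S1) ((f ^^ n) ` S2))) = 0"
    and "\<F> \<noteq> {}"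
    and "\<And>S. S \<in> \<F> \<Longrightarrow> subdendrite D S \<and> nondegenerate S \<and> f ` S \<subseteq> S"
  shows "subdendrite D (\<Inter>\<F>) \<and> f ` (\<Inter>\<F>) \<subseteq> \<Inter>\<F> \<and> (\<exists>x\<in>\<Inter>\<F>. f x = x)"
proof -
  note dD = assms(1) and fc = assms(3) and lim = assms(5) and FS = assms(7)
  have SD: "S \<subseteq> D" and Sne: "S \<noteq> {}" and Scpt: "compact S" and Sconn: "connected S"
    and Sinv: "f ` S \<subseteq> S" if "S \<in> \<F>" for S
    using FS[OF that] by (auto simp: subdendrite_def continuum_def)
  have Sconv: "sconv D S" if "S \<in> \<F>" for S
    unfolding sconv_def using SD[OF that] seg_min[OF SD[OF that] Sconn[OF that]] by blast
  have iter: "(f ^^ n) ` S \<subseteq> S" if "S \<in> \<F>" for S n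
  proof (induction n)
    case 0 then show ?case by simp
  next
    case (Suc n)
    have "(f ^^ Suc n) ` S = f ` ((f ^^ n) ` S)" by (simp add: image_comp)
    also have "\<dots> \<subseteq> f ` S" using Suc by (rule image_mono)
    also have "\<dots> \<subseteq> S" by (rule Sinv[OF that])
    finally show ?case .
  qed
  have pw: "S1 \<inter> S2 \<noteq> {}" if "S1 \<in> \<F>" "S2 \<in> \<F>" for S1 S2
  proof
    assume dis: "S1 \<inter> S2 = {}"
    define c where "c = setdist S1 S2"
    have c: "c > 0" unfolding c_def
      by (rule setdist_pos_compact) (use that dis Scpt Sne in auto)
    have "c \<le> setdist ((f ^^ n) ` S1) ((f ^^ n) ` S2)" for n
    proof -
      have "setdist S1 S2 \<le> setdist ((f ^^ n) ` S1) S2"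
        by (rule setdist_subset_left) (use iter[OF that(1)] Sne[OF that(1)] in auto)
      also have "\<dots> \<le> setdist ((f ^^ n) ` S1) ((f ^^ n) ` S2)"
        by (rule setdist_subset_right) (use iter[OF that(2)] Sne[OF that(2)] in auto)
      finally show ?thesis by (simp add: c_def)
    qed
    then have "ereal c \<le> liminf (\<lambda>n. ereal (setdist ((f ^^ n) ` S1) ((f ^^ n) ` S2)))"
      by (intro Liminf_bounded always_eventually) auto
    also have "\<dots> = 0"
      using lim[of S1 S2] FS[OF that(1)] FS[OF that(2)] by simp
    finally show False using c by simp
  qed
  obtain S0 where S0: "S0 \<in> \<F>" using assms(6) by blast
  have ne: "\<Inter>\<F> \<noteq> {}"
  proof -
    have "S0 \<inter> \<Inter>\<F> \<noteq> {}"
    proof (rule compact_imp_fip[OF Scpt[OF S0]])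
      show "closed T" if "T \<in> \<F>" for T using Scpt[OF that] by (rule compact_imp_closed)
      fix F' assume F': "finite F'" "F' \<subseteq> \<F>"
      have "\<Inter>(insert S0 F') \<noteq> {}"
      proof (rule helly_finite[OF dD])
        have sub: "insert S0 F' \<subseteq> \<F>" using F' S0 by blast
        show "\<forall>A\<in>insert S0 F'. \<forall>B\<in>insert S0 F'. A \<inter> B \<noteq> {}"
        proof (intro ballI)
          fix A B assume "A \<in> insert S0 F'" "B \<in> insert S0 F'"
          then have "A \<in> \<F>" "B \<in> \<F>" using sub by blast+
          then show "A \<inter> B \<noteq> {}" by (rule pw)
        qed
        show "\<forall>A\<in>insert S0 F'. sconv D A"
        proof
          fix A assume "A \<in> insert S0 F'"
          then have "A \<in> \<F>" using sub by blast
          then show "sconv D A" by (rule Sconv)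
        qed
      qed (use F' in auto)
      then show "S0 \<inter> \<Inter>F' \<noteq> {}" by simp
    qed
    then show ?thesis by blast
  qed
  have ID: "\<Inter>\<F> \<subseteq> D" using SD[OF S0] Inter_lower[OF S0] by (rule order_trans[rotated])
  have Icl: "closed (\<Inter>\<F>)"
    by (rule closed_Inter) (use Scpt compact_imp_closed in blast)
  have Icpt: "compact (\<Inter>\<F>)"
  proof -
    have "compact (\<Inter>\<F> \<inter> S0)" by (rule closed_Int_compact[OF Icl Scpt[OF S0]])
    moreover have "\<Inter>\<F> \<inter> S0 = \<Inter>\<F>" using S0 by blast
    ultimately show ?thesis by simp
  qed
  have Iconv: "seg D x y \<subseteq> \<Inter>\<F>" if "x \<in> \<Inter>\<F>" "y \<in> \<Inter>\<F>" for x y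
  proof
    fix z assume z: "z \<in> seg D x y"
    show "z \<in> \<Inter>\<F>"
    proof
      fix S assume "S \<in> \<F>"
      then have "sconv D S" by (rule Sconv)
      moreover have "x \<in> S" "y \<in> S" using that \<open>S \<in> \<F>\<close> by auto
      ultimately show "z \<in> S" using z unfolding sconv_def by blast
    qed
  qed
  obtain x0 where x0: "x0 \<in> \<Inter>\<F>" using ne by blast
  have x0D: "x0 \<in> D" using x0 ID by blast
  have segx0: "y \<in> seg D x0 y" "connected (seg D x0 y)" "x0 \<in> seg D x0 y" if "y \<in> \<Inter>\<F>" for y
  proof -
    have "y \<in> D" using that ID by blast
    then show "y \<in> seg D x0 y" "connected (seg D x0 y)" "x0 \<in> seg D x0 y"
      using seg_props[OF dD x0D] by auto
  qed
  have "\<Inter>\<F> = (\<Union>y\<in>\<Inter>\<F>. seg D x0 y)"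
  proof
    show "\<Inter>\<F> \<subseteq> (\<Union>y\<in>\<Inter>\<F>. seg D x0 y)"
    proof
      fix y assume "y \<in> \<Inter>\<F>"
      then show "y \<in> (\<Union>y\<in>\<Inter>\<F>. seg D x0 y)" using segx0(1) by blast
    qed
    show "(\<Union>y\<in>\<Inter>\<F>. seg D x0 y) \<subseteq> \<Inter>\<F>"
    proof
      fix z assume "z \<in> (\<Union>y\<in>\<Inter>\<F>. seg D x0 y)"
      then obtain y where "y \<in> \<Inter>\<F>" "z \<in> seg D x0 y" by blast
      then show "z \<in> \<Inter>\<F>" using Iconv[OF x0] by blast
    qed
  qed
  moreover have "connected (\<Union>y\<in>\<Inter>\<F>. seg D x0 y)"
  proof (rule connected_Union)
    show "connected S" if S: "S \<in> (\<lambda>y. seg D x0 y) ` \<Inter>\<F>" for S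
    proof -
      obtain y where "y \<in> \<Inter>\<F>" "S = seg D x0 y" using S by blast
      then show ?thesis using segx0(2) by simp
    qed
    have "x0 \<in> \<Inter>((\<lambda>y. seg D x0 y) ` \<Inter>\<F>)"
    proof (rule InterI)
      fix S assume "S \<in> (\<lambda>y. seg D x0 y) ` \<Inter>\<F>"
      then obtain y where "y \<in> \<Inter>\<F>" "S = seg D x0 y" by blast
      then show "x0 \<in> S" using segx0(3) by simp
    qed
    then show "\<Inter>((\<lambda>y. seg D x0 y) ` \<Inter>\<F>) \<noteq> {}" by blast
  qed
  ultimately have Iconn: "connected (\<Inter>\<F>)" by simp
  have sub: "subdendrite D (\<Inter>\<F>)"
    unfolding subdendrite_def continuum_def using ID ne Icpt Iconn by simp
  have inv: "f ` (\<Inter>\<F>) \<subseteq> \<Inter>\<F>"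
  proof
    fix z assume "z \<in> f ` (\<Inter>\<F>)"
    then obtain x where x: "x \<in> \<Inter>\<F>" "z = f x" by blast
    show "z \<in> \<Inter>\<F>"
    proof
      fix S assume "S \<in> \<F>"
      then have "x \<in> S" using x by blast
      then show "z \<in> S" using Sinv[OF \<open>S \<in> \<F>\<close>] x by blast
    qed
  qed
  have "\<exists>x\<in>\<Inter>\<F>. f x = x"
    by (rule dendrite_fixed_point[OF dD ID ne Icl Iconv continuous_on_subset[OF fc ID] inv])
  then show ?thesis using sub inv by blast
qed

end
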